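(* Let $d/2<k<d$ be integers. For all $t>0$, $g(t)\big(t\,g''(t)+g'(t)\big)>t\,(g'(t))^2$; consequently the function $t\mapsto t g'(t)/g(t)$ is strictly increasing on $(0,\infty)$.
   Context: $g(t)=\binom dk^{-1}\sum_{j=0}^{d-k}\binom kj\binom{d-k}{j}t^j$. *)

theory Defs
  imports "HOL-Analysis.Analysis"
begin

definition gfun :: "nat \<Rightarrow> nat \<Rightarrow> real \<Rightarrow> real" where
  "gfun d k t = inverse (real (d choose k)) *
     (\<Sum>j=0..d-k. real (k choose j) * real ((d-k) choose j) * t ^ j)"

end

theory Submission imports Defs begin

definition Q :: "nat \<Rightarrow> (nat \<Rightarrow> real) \<Rightarrow> real \<Rightarrow> real" where
  "Q m w t = (\<Sum>j=0..m. w j * t ^ j)"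

lemma Q_deriv: "(Q m w has_real_derivative (\<Sum>j=0..m. w j * real j * t ^ (j-1))) (at t)"
  unfolding Q_def
  by (auto intro!: derivative_eq_intros sum.cong simp: mult_ac)

lemma Q_tderiv: "t * (\<Sum>j=0..m. w j * real j * t ^ (j-1)) = Q m (\<lambda>j. real j * w j) t"
  unfolding Q_def sum_distrib_left
proof (rule sum.cong[OF refl])
  fix j assume "j \<in> {0..m}"
  show "t * (w j * real j * t ^ (j - 1)) = real j * w j * t ^ j"
    by (cases j) auto
qed

lemma dsum_id:
  fixes w :: "nat \<Rightarrow> real"
  shows "(\<Sum>i=0..m. \<Sum>j=0..m. w i * w j * (real i - real j)^2)
     = 2 * ((\<Sum>i=0..m. w i) * (\<Sum>j=0..m. real j ^ 2 * w j) - (\<Sum>j=0..m. real j * w j)^2)"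
proof -
  have e: "\<And>i j. w i * w j * (real i - real j)^2 = (real i ^2 * w i) * w j + w i * (real j^2 * w j) - 2 * ((real i * w i) * (real j * w j))"
    by (simp add: power2_eq_square algebra_simps)
  show ?thesis
    unfolding e sum.distrib sum_subtractf sum_distrib_left[symmetric] sum_distrib_right[symmetric]
    by (simp add: power2_eq_square algebra_simps sum_distrib_left sum_distrib_right)
qed

lemma key_pos:
  assumes "m \<ge> 1" "\<And>j. j \<le> m \<Longrightarrow> a j > 0" "t > 0"
  shows "Q m a t * Q m (\<lambda>j. real j ^ 2 * a j) t - (Q m (\<lambda>j. real j * a j) t)^2 > 0"
proof -
  define w where "w j = a j * t ^ j" for j
  have wp: "j \<le> m \<Longrightarrow> w j > 0" for j using assms by (auto simp: w_def)
  have wnn: "j \<le> m \<Longrightarrow> w j \<ge> 0" for j using wp[of j] by simp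
  have "0 < (\<Sum>i=0..m. \<Sum>j=0..m. w i * w j * (real i - real j)^2)"
  proof (rule sum_pos2[where i=0])
    show "0 < (\<Sum>j=0..m. w 0 * w j * (real 0 - real j)^2)"
    proof (rule sum_pos2[where i=m])
      show "0 < w 0 * w m * (real 0 - real m)^2" using wp assms(1) by simp
    qed (use wp in \<open>auto intro!: mult_nonneg_nonneg simp: wnn\<close>)
  qed (use wp in \<open>auto intro!: sum_nonneg mult_nonneg_nonneg simp: wnn\<close>)
  also have "\<dots> = 2 * ((\<Sum>i=0..m. w i) * (\<Sum>j=0..m. real j ^ 2 * w j) - (\<Sum>j=0..m. real j * w j)^2)"
    by (rule dsum_id)
  finally show ?thesis unfolding Q_def w_def by (simp add: mult.assoc)
qed

lemma D1_deriv: "((\<lambda>t. \<Sum>j=0..m. w j * real j * t ^ (j-1)) has_real_derivative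
    (\<Sum>j=0..m. w j * real j * (real j - 1) * t ^ (j-2))) (at t)"
proof -
  have "((\<lambda>t. \<Sum>j=0..m. w j * real j * t ^ (j-1)) has_real_derivative
    (\<Sum>j=0..m. w j * real j * (real (j-1) * t ^ (j-1-1)))) (at t)"
    by (auto intro!: derivative_eq_intros sum.cong simp: mult_ac)
  also have "(\<Sum>j=0..m. w j * real j * (real (j-1) * t ^ (j-1-1))) = (\<Sum>j=0..m. w j * real j * (real j - 1) * t ^ (j-2))"
  proof (rule sum.cong[OF refl])
    fix j assume "j \<in> {0..m}"
    show "w j * real j * (real (j-1) * t ^ (j-1-1)) = w j * real j * (real j - 1) * t ^ (j-2)"
      by (cases j) (auto simp: of_nat_diff)
  qed
  finally show ?thesis .
qed

lemma D2_id: "t * (t * (\<Sum>j=0..m. w j * real j * (real j - 1) * t ^ (j-2)) + (\<Sum>j=0..m. w j * real j * t ^ (j-1)))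
   = Q m (\<lambda>j. real j ^ 2 * w j) t"
proof -
  have "t * (t * (\<Sum>j=0..m. w j * real j * (real j - 1) * t ^ (j-2)) + (\<Sum>j=0..m. w j * real j * t ^ (j-1)))
     = (\<Sum>j=0..m. t * (t * (w j * real j * (real j - 1) * t ^ (j - 2))) + t * (w j * real j * t ^ (j - 1)))"
    by (simp add: sum_distrib_left sum.distrib distrib_left)
  also have "\<dots> = Q m (\<lambda>j. real j ^ 2 * w j) t"
    unfolding Q_def
  proof (rule sum.cong[OF refl])
    fix j assume "j \<in> {0..m}"
    show "t * (t * (w j * real j * (real j - 1) * t ^ (j - 2))) + t * (w j * real j * t ^ (j - 1)) =
           (real j)\<^sup>2 * w j * t ^ j"
    proof (cases j)
      case (Suc n) then show ?thesis
        by (cases n) (auto simp: power2_eq_square algebra_simps)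
    qed auto
  qed
  finally show ?thesis .
qed

theorem lemma16:
  fixes d k :: nat
  assumes "real d / 2 < real k" and "k < d"
  shows "(\<forall>t::real. t > 0 \<longrightarrow>
           gfun d k t * (t * deriv (deriv (gfun d k)) t + deriv (gfun d k) t)
             > t * (deriv (gfun d k) t)^2)
         \<and> strict_mono_on {0<..} (\<lambda>t. t * deriv (gfun d k) t / gfun d k t)"
proof -
  define m where "m = d - k"
  define a where "a j = real (k choose j) * real ((d-k) choose j)" for j
  define c where "c = inverse (real (d choose k))"
  define D1 where "D1 w t = (\<Sum>j=0..m. w j * real j * t ^ (j-1))" for w and t :: real
  define D2 where "D2 w t = (\<Sum>j=0..m. w j * real j * (real j - 1) * t ^ (j-2))" for w and t :: real
  have m1: "m \<ge> 1" using assms unfolding m_def by simp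
  have mk: "m < k" using assms unfolding m_def by linarith
  have apos: "a j > 0" if "j \<le> m" for j
    using that mk unfolding a_def m_def by (auto intro!: mult_pos_pos)
  have cpos: "c > 0" unfolding c_def using assms by simp
  have g: "gfun d k = (\<lambda>t. c * Q m a t)"
    by (rule ext) (simp add: gfun_def Q_def c_def a_def m_def)
  have dg: "deriv (gfun d k) = (\<lambda>t. c * D1 a t)"
  proof (rule ext)
    fix t show "deriv (gfun d k) t = c * D1 a t"
      unfolding g D1_def
      by (rule DERIV_imp_deriv) (auto intro!: derivative_eq_intros Q_deriv)
  qed
  have ddg: "deriv (deriv (gfun d k)) t = c * D2 a t" for t
    unfolding dg D1_def D2_def
    by (rule DERIV_imp_deriv, rule DERIV_cmult, rule D1_deriv)
  have tD1: "t * D1 w t = Q m (\<lambda>j. real j * w j) t" for w t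
    unfolding D1_def by (rule Q_tderiv)
  have tD2: "t * (t * D2 w t + D1 w t) = Q m (\<lambda>j. real j ^ 2 * w j) t" for w t
    unfolding D1_def D2_def by (rule D2_id)
  have Qpos: "Q m a t > 0" if "t > 0" for t
    unfolding Q_def using apos that by (intro sum_pos2[where i=0]) (auto intro!: less_imp_le)
  have part1: "gfun d k t * (t * deriv (deriv (gfun d k)) t + deriv (gfun d k) t)
             > t * (deriv (gfun d k) t)^2" if t: "t > 0" for t
  proof -
    have K: "Q m a t * Q m (\<lambda>j. real j ^ 2 * a j) t - (Q m (\<lambda>j. real j * a j) t)^2 > 0"
      by (rule key_pos[OF m1 apos t])
    have "t * (gfun d k t * (t * deriv (deriv (gfun d k)) t + deriv (gfun d k) t)) - t * (t * (deriv (gfun d k) t)^2)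
       = c^2 * (Q m a t * (t * (t * D2 a t + D1 a t)) - (t * D1 a t)^2)"
      unfolding ddg unfolding dg unfolding g by (simp add: power2_eq_square algebra_simps)
    also have "\<dots> > 0" unfolding tD1 tD2 using K cpos by simp
    finally show ?thesis using t
      by (smt (verit) mult_less_cancel_left_pos)
  qed
  have part2: "strict_mono_on {0<..} (\<lambda>t. t * deriv (gfun d k) t / gfun d k t)"
  proof (rule strict_mono_onI)
    fix x y :: real assume x: "x \<in> {0<..}" and y: "y \<in> {0<..}" and xy: "x < y"
    have eq: "t * deriv (gfun d k) t / gfun d k t = Q m (\<lambda>j. real j * a j) t / Q m a t" if "t > 0" for t
      unfolding dg unfolding g using cpos tD1[of t a] by (simp add: mult.left_commute[of t])
    have "Q m (\<lambda>j. real j * a j) x / Q m a x < Q m (\<lambda>j. real j * a j) y / Q m a y"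
    proof (rule DERIV_pos_imp_increasing[OF xy])
      fix t assume t: "x \<le> t" "t \<le> y"
      then have tp: "t > 0" using x by simp
      have qp: "Q m a t > 0" by (rule Qpos[OF tp])
      have d: "((\<lambda>t. Q m (\<lambda>j. real j * a j) t / Q m a t) has_real_derivative
          (D1 (\<lambda>j. real j * a j) t * Q m a t - Q m (\<lambda>j. real j * a j) t * D1 a t) / (Q m a t * Q m a t)) (at t)"
        unfolding D1_def using qp
        by (auto intro!: derivative_eq_intros Q_deriv)
      have K: "Q m a t * Q m (\<lambda>j. real j ^ 2 * a j) t - (Q m (\<lambda>j. real j * a j) t)^2 > 0"
        by (rule key_pos[OF m1 apos tp])
      have e1: "t * D1 (\<lambda>j. real j * a j) t = Q m (\<lambda>j. real j ^ 2 * a j) t"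
        unfolding tD1 by (simp add: power2_eq_square mult.assoc)
      have "t * (D1 (\<lambda>j. real j * a j) t * Q m a t - Q m (\<lambda>j. real j * a j) t * D1 a t)
           = Q m a t * Q m (\<lambda>j. real j ^ 2 * a j) t - (Q m (\<lambda>j. real j * a j) t)^2"
      proof -
        have "t * (D1 (\<lambda>j. real j * a j) t * Q m a t - Q m (\<lambda>j. real j * a j) t * D1 a t)
           = Q m a t * (t * D1 (\<lambda>j. real j * a j) t) - Q m (\<lambda>j. real j * a j) t * (t * D1 a t)"
          by (simp add: algebra_simps)
        then show ?thesis unfolding e1 tD1[of t a] by (simp add: power2_eq_square)
      qed
      then have "D1 (\<lambda>j. real j * a j) t * Q m a t - Q m (\<lambda>j. real j * a j) t * D1 a t > 0"
        using K tp by (metis zero_less_mult_pos)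
      then show "\<exists>y. ((\<lambda>t. Q m (\<lambda>j. real j * a j) t / Q m a t) has_real_derivative y) (at t) \<and> 0 < y"
        using d qp by (intro exI[of _ "(D1 (\<lambda>j. real j * a j) t * Q m a t - Q m (\<lambda>j. real j * a j) t * D1 a t) / (Q m a t * Q m a t)"] conjI) (auto intro!: divide_pos_pos)
    qed
    then show "x * deriv (gfun d k) x / gfun d k x < y * deriv (gfun d k) y / gfun d k y"
      using eq x y by simp
  qed
  show ?thesis using part1 part2 by blast
qed

end
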